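(* With the notation of the context, the following identities hold for all $(t,s)\in I\times I$, each whenever the Green's functions appearing in it exist: (i) $G_{M_1}[T](t,s)=G_A[2T](t,s)-G_A[2T](2T-t,s)$; (ii) $G_{M_2}[T](t,s)=G_A[2T](t,s)+G_A[2T](2T-t,s)$; (iii) $G_{M_1}[T](t,s)=G_N[2T](t,s)-G_N[2T](2T-t,s)$; (iv) $G_{M_2}[T](t,s)=G_D[2T](t,s)+G_D[2T](2T-t,s)$; (v) $G_{M_1}[T](t,s)=G_P[4T](t,s)+G_P[4T](4T-t,s)-G_P[4T](2T-t,s)-G_P[4T](2T+t,s)$; (vi) $G_{M_2}[T](t,s)=G_P[4T](t,s)-G_P[4T](4T-t,s)+G_P[4T](2T-t,s)-G_P[4T](2T+t,s)$.
   Context: Fix $n\ge 1$, $T>0$, $I=[0,T]$, $J=[0,2T]$. $W^{2n,1}(K)$ denotes the set of $u\in C^{2n-1}(K)$ with $u^{(2n-1)}$ absolutely continuous on the interval $K$. Let $a_0,\dots,a_{2n-1}\in L^{\alpha}(I)$, $\alpha\ge1$, and $Lu=u^{(2n)}+\sum_{k=0}^{2n-1}a_ku^{(k)}$ on $I$. Define $\widetilde L u=u^{(2n)}+\sum_{k=0}^{n-1}(\hat a_{2k+1}u^{(2k+1)}+\tilde a_{2k}u^{(2k)})$ on $J$, where $\tilde a_{2k}=a_{2k}$ and $\hat a_{2k+1}=a_{2k+1}$ on $I$, and $\tilde a_{2k}(t)=a_{2k}(2T-t)$, $\hat a_{2k+1}(t)=-a_{2k+1}(2T-t)$ for $t\in(T,2T]$.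 Define $\widetilde{\widetilde L}$ on $[0,4T]$ by applying the same construction to $\widetilde L$ (reflection about $2T$). An operator $M$ is nonresonant in a Banach space $X\subset W^{2n,1}(K)$ if $Mu=0$ a.e., $u\in X$, forces $u\equiv0$; then $Mu=\sigma$, $u\in X$ has for every $\sigma\in L^1(K)$ the unique solution $u(t)=\int_K G(t,s)\sigma(s)ds$, $G$ being the Green's function. Green's functions (each defined when the operator is nonresonant in the indicated space; $k$ ranges over $0,\dots,n-1$ unless stated): $G_{M_1}[T]$ for $L$ on $\{u\in W^{2n,1}(I): u^{(2k+1)}(0)=u^{(2k)}(T)=0\}$; $G_{M_2}[T]$ for $L$ on $\{u\in W^{2n,1}(I): u^{(2k)}(0)=u^{(2k+1)}(T)=0\}$; $G_A[2T]$ for $\widetilde L$ on $\{u\in W^{2n,1}(J): u^{(k)}(0)=-u^{(k)}(2T),\ k=0,\dots,2n-1\}$; $G_N[2T]$ for $\widetilde L$ on $\{u\in W^{2n,1}(J): u^{(2k+1)}(0)=u^{(2k+1)}(2T)=0\}$; $G_D[2T]$ for $\widetilde L$ on $\{u\in W^{2n,1}(J): u^{(2k)}(0)=u^{(2k)}(2T)=0\}$; $G_P[4T]$ for $\widetilde{\widetilde L}$ on $\{u\in W^{2n,1}([0,4T]): u^{(k)}(0)=u^{(k)}(4T),\ k=0,\dots,2n-1\}$. *)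

theory Defs
  imports "HOL-Analysis.Analysis"
begin

definition abs_cont_on :: "real set \<Rightarrow> (real \<Rightarrow> real) \<Rightarrow> bool" where
  "abs_cont_on K f \<longleftrightarrow>
     (\<forall>\<epsilon>>0. \<exists>\<delta>>0. \<forall>(m::nat) (x::nat \<Rightarrow> real) y.
        (\<forall>i<m. x i \<in> K \<and> y i \<in> K \<and> x i \<le> y i) \<and>
        (\<forall>i. Suc i < m \<longrightarrow> y i \<le> x (Suc i)) \<and>
        (\<Sum>i<m. y i - x i) < \<delta>
        \<longrightarrow> (\<Sum>i<m. \<bar>f (y i) - f (x i)\<bar>) < \<epsilon>)"

text \<open>D k plays the role of u^(k) (D 0 = u).  sol n K a sigma D: the function u = D 0 lies in
  W^{2n,1}(K) (D 0..D(2n-1) are successive derivatives on K, one-sided at the endpoints, and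
  D(2n-1) is absolutely continuous on K) and
  u^(2n) + sum_{k<2n} a k * u^(k) = sigma  almost everywhere on K.\<close>
definition sol :: "nat \<Rightarrow> real set \<Rightarrow> (nat \<Rightarrow> real \<Rightarrow> real) \<Rightarrow> (real \<Rightarrow> real)
                   \<Rightarrow> (nat \<Rightarrow> real \<Rightarrow> real) \<Rightarrow> bool" where
  "sol n K a \<sigma> D \<longleftrightarrow>
     (\<forall>k < 2*n - 1. \<forall>t\<in>K. (D k has_real_derivative D (Suc k) t) (at t within K)) \<and>
     abs_cont_on K (D (2*n - 1)) \<and>
     (AE t in lebesgue_on K.
        (D (2*n - 1) has_real_derivative (\<sigma> t - (\<Sum>k<2*n. a k t * D k t))) (at t within K))"

definition nonresonant :: "nat \<Rightarrow> real set \<Rightarrow> (nat \<Rightarrow> real \<Rightarrow> real)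
                           \<Rightarrow> ((nat \<Rightarrow> real \<Rightarrow> real) \<Rightarrow> bool) \<Rightarrow> bool" where
  "nonresonant n K a BC \<longleftrightarrow>
     (\<forall>D. sol n K a (\<lambda>_. 0) D \<and> BC D \<longrightarrow> (\<forall>t\<in>K. D 0 t = 0))"

definition green :: "nat \<Rightarrow> real set \<Rightarrow> (nat \<Rightarrow> real \<Rightarrow> real)
                     \<Rightarrow> ((nat \<Rightarrow> real \<Rightarrow> real) \<Rightarrow> bool) \<Rightarrow> (real \<Rightarrow> real \<Rightarrow> real) \<Rightarrow> bool" where
  "green n K a BC G \<longleftrightarrow> nonresonant n K a BC \<and>
     (\<forall>\<sigma>. integrable (lebesgue_on K) \<sigma> \<longrightarrow>
        (\<exists>D. sol n K a \<sigma> D \<and> BC D \<and>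
           (\<forall>t\<in>K. integrable (lebesgue_on K) (\<lambda>s. G t s * \<sigma> s) \<and>
                   D 0 t = integral\<^sup>L (lebesgue_on K) (\<lambda>s. G t s * \<sigma> s))))"

definition refl_coeffs :: "real \<Rightarrow> (nat \<Rightarrow> real \<Rightarrow> real) \<Rightarrow> nat \<Rightarrow> real \<Rightarrow> real" where
  "refl_coeffs c a k t = (if t \<le> c then a k t else (if even k then 1 else -1) * a k (2*c - t))"

definition BC_M1 :: "nat \<Rightarrow> real \<Rightarrow> (nat \<Rightarrow> real \<Rightarrow> real) \<Rightarrow> bool" where
  "BC_M1 n T D \<longleftrightarrow> (\<forall>k<n. D (2*k+1) 0 = 0 \<and> D (2*k) T = 0)"
definition BC_M2 :: "nat \<Rightarrow> real \<Rightarrow> (nat \<Rightarrow> real \<Rightarrow> real) \<Rightarrow> bool" where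
  "BC_M2 n T D \<longleftrightarrow> (\<forall>k<n. D (2*k) 0 = 0 \<and> D (2*k+1) T = 0)"
definition BC_A :: "nat \<Rightarrow> real \<Rightarrow> (nat \<Rightarrow> real \<Rightarrow> real) \<Rightarrow> bool" where
  "BC_A n S D \<longleftrightarrow> (\<forall>k<2*n. D k 0 = - D k S)"
definition BC_N :: "nat \<Rightarrow> real \<Rightarrow> (nat \<Rightarrow> real \<Rightarrow> real) \<Rightarrow> bool" where
  "BC_N n S D \<longleftrightarrow> (\<forall>k<n. D (2*k+1) 0 = 0 \<and> D (2*k+1) S = 0)"
definition BC_D :: "nat \<Rightarrow> real \<Rightarrow> (nat \<Rightarrow> real \<Rightarrow> real) \<Rightarrow> bool" where
  "BC_D n S D \<longleftrightarrow> (\<forall>k<n. D (2*k) 0 = 0 \<and> D (2*k) S = 0)"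
definition BC_P :: "nat \<Rightarrow> real \<Rightarrow> (nat \<Rightarrow> real \<Rightarrow> real) \<Rightarrow> bool" where
  "BC_P n S D \<longleftrightarrow> (\<forall>k<2*n. D k 0 = D k S)"

end

theory Submission
  imports Defs
begin


definition acg :: "real set \<Rightarrow> (real \<Rightarrow> real) \<Rightarrow> real \<Rightarrow> real \<Rightarrow> bool" where
  "acg K f \<epsilon> \<delta> \<longleftrightarrow> (\<forall>(m::nat) (x::nat \<Rightarrow> real) y.
        (\<forall>i<m. x i \<in> K \<and> y i \<in> K \<and> x i \<le> y i) \<and>
        (\<forall>i. Suc i < m \<longrightarrow> y i \<le> x (Suc i)) \<and>
        (\<Sum>i<m. y i - x i) < \<delta>
        \<longrightarrow> (\<Sum>i<m. \<bar>f (y i) - f (x i)\<bar>) < \<epsilon>)"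

lemma abs_cont_on_acg: "abs_cont_on K f \<longleftrightarrow> (\<forall>\<epsilon>>0. \<exists>\<delta>>0. acg K f \<epsilon> \<delta>)"
  unfolding abs_cont_on_def acg_def by simp

lemma acgD: "acg K f \<epsilon> \<delta> \<Longrightarrow> (\<forall>i<m. x i \<in> K \<and> y i \<in> K \<and> x i \<le> y i) \<Longrightarrow>
        (\<forall>i. Suc i < m \<longrightarrow> y i \<le> x (Suc i)) \<Longrightarrow> (\<Sum>i<m. y i - x i) < \<delta>
        \<Longrightarrow> (\<Sum>i<m. \<bar>f (y i) - f (x i)\<bar>) < \<epsilon>"
  unfolding acg_def by blast

lemma abs_cont_add:
  assumes f: "abs_cont_on K f" and g: "abs_cont_on K g"
  shows "abs_cont_on K (\<lambda>t. f t + g t)"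
  unfolding abs_cont_on_acg
proof (intro allI impI)
  fix \<epsilon> :: real assume e: "\<epsilon> > 0"
  then have e2: "\<epsilon>/2 > 0" by simp
  obtain d1 where d1: "d1 > 0" "acg K f (\<epsilon>/2) d1"
    using f e2 unfolding abs_cont_on_acg by blast
  obtain d2 where d2: "d2 > 0" "acg K g (\<epsilon>/2) d2"
    using g e2 unfolding abs_cont_on_acg by blast
  show "\<exists>\<delta>>0. acg K (\<lambda>t. f t + g t) \<epsilon> \<delta>"
    unfolding acg_def
  proof (intro exI[of _ "min d1 d2"] conjI allI impI)
    show "min d1 d2 > 0" using d1 d2 by simp
    fix m and x y :: "nat \<Rightarrow> real"
    assume H: "(\<forall>i<m. x i \<in> K \<and> y i \<in> K \<and> x i \<le> y i) \<and>
        (\<forall>i. Suc i < m \<longrightarrow> y i \<le> x (Suc i)) \<and> (\<Sum>i<m. y i - x i) < min d1 d2"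
    have "(\<Sum>i<m. \<bar>(f (y i) + g (y i)) - (f (x i) + g (x i))\<bar>)
       \<le> (\<Sum>i<m. \<bar>f (y i) - f (x i)\<bar> + \<bar>g (y i) - g (x i)\<bar>)"
      by (intro sum_mono) linarith
    also have "\<dots> = (\<Sum>i<m. \<bar>f (y i) - f (x i)\<bar>) + (\<Sum>i<m. \<bar>g (y i) - g (x i)\<bar>)"
      by (simp add: sum.distrib)
    also have "\<dots> < \<epsilon>/2 + \<epsilon>/2"
      using acgD[OF d1(2), of m x y] acgD[OF d2(2), of m x y] H by auto
    finally show "(\<Sum>i<m. \<bar>(f (y i) + g (y i)) - (f (x i) + g (x i))\<bar>) < \<epsilon>" by simp
  qed
qed

lemma abs_cont_scale:
  assumes f: "abs_cont_on K f"
  shows "abs_cont_on K (\<lambda>t. c * f t)"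
proof (cases "c = 0")
  case True then show ?thesis unfolding abs_cont_on_def by (auto intro: exI[of _ 1])
next
  case False
  show ?thesis unfolding abs_cont_on_acg
  proof (intro allI impI)
    fix \<epsilon> :: real assume e: "\<epsilon> > 0"
    have "\<epsilon> / \<bar>c\<bar> > 0" using e False by simp
    then obtain d1 where d1: "d1 > 0" "acg K f (\<epsilon>/\<bar>c\<bar>) d1"
      using f unfolding abs_cont_on_acg by blast
    show "\<exists>\<delta>>0. acg K (\<lambda>t. c * f t) \<epsilon> \<delta>" unfolding acg_def
    proof (intro exI[of _ d1] conjI allI impI)
      show "d1 > 0" by fact
      fix m and x y :: "nat \<Rightarrow> real"
      assume H: "(\<forall>i<m. x i \<in> K \<and> y i \<in> K \<and> x i \<le> y i) \<and>
        (\<forall>i. Suc i < m \<longrightarrow> y i \<le> x (Suc i)) \<and> (\<Sum>i<m. y i - x i) < d1"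
      have "(\<Sum>i<m. \<bar>c * f (y i) - c * f (x i)\<bar>) = \<bar>c\<bar> * (\<Sum>i<m. \<bar>f (y i) - f (x i)\<bar>)"
        by (simp add: sum_distrib_left abs_mult right_diff_distrib[symmetric])
      also have "\<dots> < \<bar>c\<bar> * (\<epsilon>/\<bar>c\<bar>)"
        using acgD[OF d1(2), of m x y] H False by (intro mult_strict_left_mono) auto
      also have "\<dots> = \<epsilon>" using False by simp
      finally show "(\<Sum>i<m. \<bar>c * f (y i) - c * f (x i)\<bar>) < \<epsilon>" .
    qed
  qed
qed

lemma abs_cont_const: "abs_cont_on K (\<lambda>t. c)"
  unfolding abs_cont_on_def by (auto intro: exI[of _ 1])



lemma abs_cont_affine:
  assumes f: "abs_cont_on K' f" and e: "e = 1 \<or> e = -1" and mp: "\<forall>t\<in>K. e*t+d \<in> K'"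
  shows "abs_cont_on K (\<lambda>t. f (e*t+d))"
  unfolding abs_cont_on_acg
proof (intro allI impI)
  fix \<epsilon> :: real assume ep: "\<epsilon> > 0"
  obtain d1 where d1: "d1 > 0" "acg K' f \<epsilon> d1"
    using f ep unfolding abs_cont_on_acg by blast
  show "\<exists>\<delta>>0. acg K (\<lambda>t. f (e*t+d)) \<epsilon> \<delta>"
    unfolding acg_def
  proof (intro exI[of _ d1] conjI allI impI)
    show "d1 > 0" by fact
    fix m and x y :: "nat \<Rightarrow> real"
    assume H: "(\<forall>i<m. x i \<in> K \<and> y i \<in> K \<and> x i \<le> y i) \<and>
        (\<forall>i. Suc i < m \<longrightarrow> y i \<le> x (Suc i)) \<and> (\<Sum>i<m. y i - x i) < d1"
    show "(\<Sum>i<m. \<bar>f (e * y i + d) - f (e * x i + d)\<bar>) < \<epsilon>"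
      using e
    proof
      assume e1: "e = 1"
      have "(\<Sum>i<m. \<bar>f ((\<lambda>i. y i + d) i) - f ((\<lambda>i. x i + d) i)\<bar>) < \<epsilon>"
      proof (rule acgD[OF d1(2)])
        show "\<forall>i<m. x i + d \<in> K' \<and> y i + d \<in> K' \<and> x i + d \<le> y i + d"
          using H mp e1 by (auto simp: add.commute)
        show "\<forall>i. Suc i < m \<longrightarrow> y i + d \<le> x (Suc i) + d" using H by auto
        show "(\<Sum>i<m. y i + d - (x i + d)) < d1" using H by simp
      qed
      then show ?thesis using e1 by (simp add: add.commute)
    next
      assume e1: "e = -1"
      let ?x = "\<lambda>i. - y (m - Suc i) + d" and ?y = "\<lambda>i. - x (m - Suc i) + d"
      have "(\<Sum>i<m. \<bar>f (?y i) - f (?x i)\<bar>) < \<epsilon>"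
      proof (rule acgD[OF d1(2)])
        show "\<forall>i<m. ?x i \<in> K' \<and> ?y i \<in> K' \<and> ?x i \<le> ?y i"
        proof (intro allI impI)
          fix i assume i: "i < m"
          then have "m - Suc i < m" by simp
          then show "?x i \<in> K' \<and> ?y i \<in> K' \<and> ?x i \<le> ?y i"
            using H mp e1 by auto
        qed
        show "\<forall>i. Suc i < m \<longrightarrow> ?y i \<le> ?x (Suc i)"
        proof (intro allI impI)
          fix i assume i: "Suc i < m"
          define j where "j = m - Suc (Suc i)"
          have j: "Suc j < m" "Suc j = m - Suc i" using i unfolding j_def by auto
          have "y j \<le> x (Suc j)" using H j(1) by auto
          then show "?y i \<le> ?x (Suc i)" using j(2) unfolding j_def by simp
        qed
        have "(\<Sum>i<m. ?y i - ?x i) = (\<Sum>i<m. (\<lambda>i. y i - x i) (m - Suc i))" by simp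
        also have "\<dots> = (\<Sum>i<m. y i - x i)" by (rule sum.nat_diff_reindex)
        finally show "(\<Sum>i<m. ?y i - ?x i) < d1" using H by simp
      qed
      moreover have "(\<Sum>i<m. \<bar>f (?y i) - f (?x i)\<bar>) = (\<Sum>i<m. (\<lambda>i. \<bar>f (- x i + d) - f (- y i + d)\<bar>) (m - Suc i))"
        by simp
      moreover have "\<dots> = (\<Sum>i<m. \<bar>f (- x i + d) - f (- y i + d)\<bar>)" by (rule sum.nat_diff_reindex)
      ultimately show ?thesis using e1 by (simp add: abs_minus_commute)
    qed
  qed
qed



lemma deriv_eq: "(f has_field_derivative x) F \<Longrightarrow> x = y \<Longrightarrow> (f has_field_derivative y) F"
  by simp

lemma sol_add:
  assumes "sol n K a \<sigma>1 D1" "sol n K a \<sigma>2 D2"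
  shows "sol n K a (\<lambda>t. \<sigma>1 t + \<sigma>2 t) (\<lambda>k t. D1 k t + D2 k t)"
proof -
  have d1: "\<forall>k < 2*n - 1. \<forall>t\<in>K. (D1 k has_real_derivative D1 (Suc k) t) (at t within K)"
   and a1: "abs_cont_on K (D1 (2*n - 1))"
   and e1: "AE t in lebesgue_on K.
        (D1 (2*n - 1) has_real_derivative (\<sigma>1 t - (\<Sum>k<2*n. a k t * D1 k t))) (at t within K)"
    using assms(1) unfolding sol_def by auto
  have d2: "\<forall>k < 2*n - 1. \<forall>t\<in>K. (D2 k has_real_derivative D2 (Suc k) t) (at t within K)"
   and a2: "abs_cont_on K (D2 (2*n - 1))"
   and e2: "AE t in lebesgue_on K.
        (D2 (2*n - 1) has_real_derivative (\<sigma>2 t - (\<Sum>k<2*n. a k t * D2 k t))) (at t within K)"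
    using assms(2) unfolding sol_def by auto
  show ?thesis unfolding sol_def
  proof (intro conjI ballI allI impI)
    fix k t assume "k < 2*n - 1" "t \<in> K"
    then show "((\<lambda>t. D1 k t + D2 k t) has_real_derivative D1 (Suc k) t + D2 (Suc k) t) (at t within K)"
      using d1 d2 by (auto intro!: DERIV_add)
  next
    show "abs_cont_on K (\<lambda>t. D1 (2 * n - 1) t + D2 (2 * n - 1) t)"
      using a1 a2 by (rule abs_cont_add)
  next
    show "AE t in lebesgue_on K. ((\<lambda>t. D1 (2 * n - 1) t + D2 (2 * n - 1) t) has_real_derivative
          \<sigma>1 t + \<sigma>2 t - (\<Sum>k<2 * n. a k t * (D1 k t + D2 k t))) (at t within K)"
      using e1 e2
    proof eventually_elim
      case (elim t)
      show ?case
        by (rule deriv_eq[OF DERIV_add[OF elim(1) elim(2)]])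
           (simp add: distrib_left sum.distrib)
    qed
  qed
qed

lemma sol_scale:
  assumes "sol n K a \<sigma> D"
  shows "sol n K a (\<lambda>t. c * \<sigma> t) (\<lambda>k t. c * D k t)"
proof -
  have d1: "\<forall>k < 2*n - 1. \<forall>t\<in>K. (D k has_real_derivative D (Suc k) t) (at t within K)"
   and a1: "abs_cont_on K (D (2*n - 1))"
   and e1: "AE t in lebesgue_on K.
        (D (2*n - 1) has_real_derivative (\<sigma> t - (\<Sum>k<2*n. a k t * D k t))) (at t within K)"
    using assms(1) unfolding sol_def by auto
  show ?thesis unfolding sol_def
  proof (intro conjI ballI allI impI)
    fix k t assume "k < 2*n - 1" "t \<in> K"
    then show "((\<lambda>t. c * D k t) has_real_derivative c * D (Suc k) t) (at t within K)"
      using d1 by (auto intro!: DERIV_cmult)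
  next
    show "abs_cont_on K (\<lambda>t. c * D (2 * n - 1) t)"
      using a1 by (rule abs_cont_scale)
  next
    show "AE t in lebesgue_on K. ((\<lambda>t. c * D (2 * n - 1) t) has_real_derivative
          c * \<sigma> t - (\<Sum>k<2 * n. a k t * (c * D k t))) (at t within K)"
      using e1
    proof eventually_elim
      case (elim t)
      show ?case
        by (rule deriv_eq[OF DERIV_cmult[OF elim(1)]])
           (simp add: right_diff_distrib sum_distrib_left mult.left_commute)
    qed
  qed
qed

lemma sol_zero: "sol n K a (\<lambda>_. 0) (\<lambda>_ _. 0)"
  unfolding sol_def by (auto simp: abs_cont_const)

lemma sol_sum:
  assumes "finite J" "\<forall>j\<in>J. sol n K a (\<sigma> j) (D j)"
  shows "sol n K a (\<lambda>t. \<Sum>j\<in>J. \<sigma> j t) (\<lambda>k t. \<Sum>j\<in>J. D j k t)"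
  using assms
proof (induction J rule: finite_induct)
  case empty then show ?case using sol_zero by simp
next
  case (insert j J)
  then have "sol n K a (\<lambda>t. \<sigma> j t + (\<Sum>j\<in>J. \<sigma> j t)) (\<lambda>k t. D j k t + (\<Sum>j\<in>J. D j k t))"
    by (intro sol_add) auto
  then show ?case using insert by simp
qed

lemma sol_cong_sigma:
  assumes "sol n K a \<sigma> D" "AE t in lebesgue_on K. \<sigma> t = \<sigma>' t"
  shows "sol n K a \<sigma>' D"
proof -
  have "AE t in lebesgue_on K.
        (D (2*n - 1) has_real_derivative (\<sigma> t - (\<Sum>k<2*n. a k t * D k t))) (at t within K)"
    using assms(1) unfolding sol_def by auto
  then have "AE t in lebesgue_on K.
        (D (2*n - 1) has_real_derivative (\<sigma>' t - (\<Sum>k<2*n. a k t * D k t))) (at t within K)"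
    using assms(2) by eventually_elim simp
  then show ?thesis using assms(1) unfolding sol_def by auto
qed



lemma AE_affine_pullback:
  fixes e d :: real
  assumes e: "e = 1 \<or> e = -1" and P: "AE x in lebesgue_on K'. P x"
    and K: "K \<in> sets lebesgue" "K' \<in> sets lebesgue" and mp: "\<forall>t\<in>K. e*t+d \<in> K'"
  shows "AE t in lebesgue_on K. P (e*t+d)"
proof -
  have "AE x in lebesgue. x \<in> K' \<longrightarrow> P x" using P AE_restrict_space_iff[of K' lebesgue] K by simp
  then obtain N where N0: "{x\<in>space lebesgue. \<not>(x\<in>K' \<longrightarrow> P x)} \<subseteq> N"
     "emeasure lebesgue N = 0" "N \<in> sets lebesgue"
    by (rule AE_E)
  then have N: "{x. \<not>(x\<in>K' \<longrightarrow> P x)} \<subseteq> N" "N \<in> null_sets lebesgue"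
    by (auto intro: null_setsI)
  have neg: "negligible N" using N(2) negligible_iff_null_sets by blast
  let ?g = "\<lambda>x::real. e*(x - d)"
  have "?g differentiable_on N"
    by (auto simp: differentiable_on_def differentiable_def intro!: exI derivative_eq_intros)
  then have "negligible (?g ` N)"
    by (intro negligible_differentiable_image_negligible neg) auto
  then have "?g ` N \<in> null_sets lebesgue" using negligible_iff_null_sets by blast
  then have "AE t in lebesgue. t \<notin> ?g ` N" using AE_iff_null_sets null_setsD2 by blast
  then have "AE t in lebesgue. t \<in> K \<longrightarrow> P (e*t+d)"
  proof eventually_elim
    case (elim t)
    show ?case
    proof
      assume tK: "t \<in> K"
      show "P (e*t+d)"
      proof (rule ccontr)
        assume "\<not> P (e*t+d)"
        then have "e*t+d \<in> N" using N(1) mp tK by auto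
        moreover have "?g (e*t+d) = t" using e by auto
        ultimately show False using elim by (metis image_eqI)
      qed
    qed
  qed
  then show ?thesis using AE_restrict_space_iff[of K lebesgue] K by simp
qed

lemma e_pow: assumes e: "e = 1 \<or> e = (-1::real)" and n: "n \<ge> 1"
  shows "e^(2*n - 1) * e = 1"
proof -
  have "e^(2*n - 1) * e = e^(Suc (2*n - 1))" by (simp add: mult.commute)
  also have "Suc (2*n - 1) = 2*n" using n by simp
  also have "e^(2*n) = (e^2)^n" by (simp add: power_mult)
  also have "\<dots> = 1" using e by auto
  finally show ?thesis .
qed

lemma sol_affine:
  assumes sol: "sol n K' b \<sigma>' D" and n: "n \<ge> 1" and e: "e = 1 \<or> e = -1"
    and mp: "\<forall>t\<in>K. e*t+d \<in> K'" and K: "K \<in> sets lebesgue" "K' \<in> sets lebesgue"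
    and co: "AE t in lebesgue_on K. \<forall>k<2*n. b k (e*t+d) = e^k * a k t"
  shows "sol n K a (\<lambda>t. \<sigma>' (e*t+d)) (\<lambda>k t. e^k * D k (e*t+d))"
proof -
  have d1: "\<forall>k < 2*n - 1. \<forall>t\<in>K'. (D k has_real_derivative D (Suc k) t) (at t within K')"
   and a1: "abs_cont_on K' (D (2*n - 1))"
   and e1: "AE t in lebesgue_on K'.
        (D (2*n - 1) has_real_derivative (\<sigma>' t - (\<Sum>k<2*n. b k t * D k t))) (at t within K')"
    using sol unfolding sol_def by auto
  have chain: "((\<lambda>t. e^k * D k (e*t+d)) has_real_derivative e^k * (D' * e)) (at t within K)"
    if "(D k has_real_derivative D') (at (e*t+d) within K')" "t \<in> K" for k t D'
  proof -
    have s: "(\<lambda>t. e*t+d) ` K \<subseteq> K'" using mp by auto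
    have "(D k has_real_derivative D') (at ((\<lambda>t. e*t+d) t) within (\<lambda>t. e*t+d) ` K)"
      using has_field_derivative_subset[OF that(1) s] by simp
    moreover have "((\<lambda>t. e*t+d) has_real_derivative e) (at t within K)"
      by (auto intro!: derivative_eq_intros)
    ultimately have "(D k \<circ> (\<lambda>t. e*t+d) has_real_derivative D' * e) (at t within K)"
      by (rule DERIV_image_chain)
    then show ?thesis unfolding o_def by (rule DERIV_cmult)
  qed
  show ?thesis unfolding sol_def
  proof (intro conjI ballI allI impI)
    fix k t assume k: "k < 2*n - 1" and t: "t \<in> K"
    then have "(D k has_real_derivative D (Suc k) (e*t+d)) (at (e*t+d) within K')"
      using d1 mp by auto
    from chain[OF this t]
    show "((\<lambda>t. e ^ k * D k (e * t + d)) has_real_derivative e ^ Suc k * D (Suc k) (e * t + d)) (at t within K)"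
      by (rule deriv_eq) (simp add: mult_ac)
  next
    show "abs_cont_on K (\<lambda>t. e ^ (2 * n - 1) * D (2 * n - 1) (e * t + d))"
      by (intro abs_cont_scale abs_cont_affine[OF a1 e mp])
  next
    have p: "AE t in lebesgue_on K. (D (2*n - 1) has_real_derivative
        (\<sigma>' (e*t+d) - (\<Sum>k<2*n. b k (e*t+d) * D k (e*t+d)))) (at (e*t+d) within K')"
      by (rule AE_affine_pullback[OF e e1 K mp])
    have sp: "AE t in lebesgue_on K. t \<in> K"
      using AE_space[of "lebesgue_on K"] by simp
    show "AE t in lebesgue_on K. ((\<lambda>t. e ^ (2 * n - 1) * D (2 * n - 1) (e * t + d)) has_real_derivative
          \<sigma>' (e * t + d) - (\<Sum>k<2 * n. a k t * (e ^ k * D k (e * t + d)))) (at t within K)"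
      using p sp co
    proof eventually_elim
      case (elim t)
      have "(\<Sum>k<2*n. b k (e*t+d) * D k (e*t+d)) = (\<Sum>k<2 * n. a k t * (e ^ k * D k (e * t + d)))"
        using elim(3) by (intro sum.cong) auto
      moreover have ev: "e^(2*n-1) * (V * e) = V" for V
      proof -
        have "e^(2*n-1) * (V * e) = (e^(2*n-1) * e) * V" by (simp add: mult_ac)
        then show ?thesis using e_pow[OF e n] by simp
      qed
      ultimately show ?case using chain[OF elim(1) elim(2)] unfolding ev by simp
    qed
  qed
qed



lemma AE_pt: assumes "K \<in> sets lebesgue" shows "AE t in lebesgue_on K. t \<noteq> (c::real)"
proof -
  have "{c} \<in> null_sets lebesgue" using negligible_iff_null_sets negligible_sing by blast
  then have "AE t in lebesgue. t \<notin> {c}" using AE_iff_null_sets null_setsD2 by blast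
  then have "AE t in lebesgue. t \<in> K \<longrightarrow> t \<noteq> c" by (rule eventually_mono) auto
  then show ?thesis using AE_restrict_space_iff[of K lebesgue] assms by simp
qed

lemma zero_AE:
  fixes H :: "real \<Rightarrow> real"
  assumes H: "\<forall>\<sigma>. integrable (lebesgue_on {a..b}) \<sigma> \<longrightarrow>
     integrable (lebesgue_on {a..b}) (\<lambda>s. H s * \<sigma> s) \<and>
     integral\<^sup>L (lebesgue_on {a..b}) (\<lambda>s. H s * \<sigma> s) = 0"
  shows "AE s in lebesgue_on {a..b}. H s = 0"
proof -
  let ?M = "lebesgue_on {a..b}"
  have "integrable ?M (\<lambda>s. H s * 1)" using H integrable_const_ivl by blast
  then have Hm: "H \<in> borel_measurable ?M" by simp
  have fm: "finite_measure ?M" by (rule finite_measure_lebesgue_on) simp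
  have "integrable ?M (\<lambda>s. sgn (H s))"
    by (rule finite_measure.integrable_const_bound[OF fm, where B=1])
       (auto simp: abs_sgn_eq intro!: measurable_compose[OF Hm])
  then have i1: "integrable ?M (\<lambda>s. H s * sgn (H s))" and i0: "integral\<^sup>L ?M (\<lambda>s. H s * sgn (H s)) = 0"
    using H by blast+
  have eqf: "(\<lambda>s. H s * sgn (H s)) = (\<lambda>s. \<bar>H s\<bar>)" by (auto simp: sgn_real_def fun_eq_iff)
  have "integrable ?M (\<lambda>s. \<bar>H s\<bar>)" "integral\<^sup>L ?M (\<lambda>s. \<bar>H s\<bar>) = 0"
    using i1 i0 unfolding eqf by auto
  then have "AE s in ?M. \<bar>H s\<bar> = 0" using integral_nonneg_eq_0_iff_AE[of ?M "\<lambda>s. \<bar>H s\<bar>"] by simp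
  then show ?thesis by simp
qed

lemma restrict_int:
  fixes f :: "real \<Rightarrow> real"
  assumes TL: "T \<le> L" and i: "integrable (lebesgue_on {0..L}) f" and z: "\<forall>s. s \<notin> {0..T} \<longrightarrow> f s = 0"
  shows "integrable (lebesgue_on {0..T}) f"
    and "integral\<^sup>L (lebesgue_on {0..T}) f = integral\<^sup>L (lebesgue_on {0..L}) f"
proof -
  have eq: "(\<lambda>x. indicator {0..L} x *\<^sub>R f x) = (\<lambda>x. indicator {0..T} x *\<^sub>R f x)"
    using z TL by (auto simp: indicator_def fun_eq_iff)
  have "integrable lebesgue (\<lambda>x. indicator {0..L} x *\<^sub>R f x)"
    using i by (subst integrable_restrict_space[symmetric]) auto
  then have "integrable lebesgue (\<lambda>x. indicator {0..T} x *\<^sub>R f x)" unfolding eq .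
  then show "integrable (lebesgue_on {0..T}) f"
    by (subst integrable_restrict_space) auto
  show "integral\<^sup>L (lebesgue_on {0..T}) f = integral\<^sup>L (lebesgue_on {0..L}) f"
  proof -
    have a: "integral\<^sup>L (lebesgue_on {0..T}) f = integral\<^sup>L lebesgue (\<lambda>x. indicator {0..T} x *\<^sub>R f x)"
      by (rule integral_restrict_space) auto
    have b: "integral\<^sup>L (lebesgue_on {0..L}) f = integral\<^sup>L lebesgue (\<lambda>x. indicator {0..L} x *\<^sub>R f x)"
      by (rule integral_restrict_space) auto
    show ?thesis unfolding a b eq ..
  qed
qed

lemma ext_int:
  fixes \<sigma> :: "real \<Rightarrow> real"
  assumes TL: "T \<le> L" and i: "integrable (lebesgue_on {0..T}) \<sigma>"
  shows "integrable (lebesgue_on {0..L}) (\<lambda>s. if s \<in> {0..T} then \<sigma> s else 0)"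
proof -
  have eq: "(\<lambda>x. indicator {0..L} x *\<^sub>R (if x \<in> {0..T} then \<sigma> x else 0)) = (\<lambda>x. indicator {0..T} x *\<^sub>R \<sigma> x)"
    using TL by (auto simp: indicator_def fun_eq_iff)
  have "integrable lebesgue (\<lambda>x. indicator {0..T} x *\<^sub>R \<sigma> x)"
    using i by (subst integrable_restrict_space[symmetric]) auto
  then have "integrable lebesgue (\<lambda>x. indicator {0..L} x *\<^sub>R (if x \<in> {0..T} then \<sigma> x else 0))" unfolding eq .
  then show ?thesis
    by (subst integrable_restrict_space) auto
qed

lemma sol_unique:
  assumes nr: "nonresonant n K a BC" and s1: "sol n K a \<sigma> D1" and s2: "sol n K a \<sigma> D2"
    and bc: "BC (\<lambda>k t. D1 k t - D2 k t)" and t: "t \<in> K"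
  shows "D1 0 t = D2 0 t"
proof -
  have "sol n K a (\<lambda>t. \<sigma> t + (-1) * \<sigma> t) (\<lambda>k t. D1 k t + (-1) * D2 k t)"
    by (intro sol_add sol_scale s1 s2)
  then have "sol n K a (\<lambda>_. 0) (\<lambda>k t. D1 k t - D2 k t)" by simp
  then show ?thesis using nr bc t unfolding nonresonant_def by fastforce
qed



lemma green_comb:
  fixes T L :: real and m :: nat and c e d :: "nat \<Rightarrow> real"
  assumes n: "n \<ge> 1" and T: "0 < T" "T \<le> L"
   and gs: "green n {0..T} a BCs GM" and gb: "green n {0..L} b BCb G"
   and e: "\<forall>j<m. e j = 1 \<or> e j = -1"
   and mp: "\<forall>j<m. \<forall>t\<in>{0..T}. e j * t + d j \<in> {0..L}"
   and co: "AE t in lebesgue_on {0..T}. \<forall>j<m. \<forall>k<2*n. b k (e j * t + d j) = e j ^ k * a k t"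
   and sg: "\<forall>\<sigma>. AE t in lebesgue_on {0..T}.
      (\<Sum>j<m. c j * (if e j * t + d j \<in> {0..T} then \<sigma> (e j * t + d j) else 0)) = \<sigma> t"
   and bcs: "\<forall>W. BCb W \<longrightarrow> BCs (\<lambda>k t. \<Sum>j<m. c j * (e j ^ k * W k (e j * t + d j)))"
   and bcd: "\<forall>D1 D2. BCs D1 \<longrightarrow> BCs D2 \<longrightarrow> BCs (\<lambda>k t. D1 k t - D2 k t)"
  shows "\<forall>t\<in>{0..T}. AE s in lebesgue_on {0..T}. GM t s = (\<Sum>j<m. c j * G (e j * t + d j) s)"
proof
  fix t :: real assume t: "t \<in> {0..T}"
  let ?H = "\<lambda>s. GM t s - (\<Sum>j<m. c j * G (e j * t + d j) s)"
  have "AE s in lebesgue_on {0..T}. ?H s = 0"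
  proof (rule zero_AE, intro allI impI)
    fix \<sigma> :: "real \<Rightarrow> real" assume i\<sigma>: "integrable (lebesgue_on {0..T}) \<sigma>"
    define \<sigma>' where "\<sigma>' = (\<lambda>s. if s \<in> {0..T} then \<sigma> s else (0::real))"
    have i\<sigma>': "integrable (lebesgue_on {0..L}) \<sigma>'" unfolding \<sigma>'_def by (rule ext_int[OF T(2) i\<sigma>])
    obtain W where W: "sol n {0..L} b \<sigma>' W" "BCb W"
      "\<forall>x\<in>{0..L}. integrable (lebesgue_on {0..L}) (\<lambda>s. G x s * \<sigma>' s) \<and>
                   W 0 x = integral\<^sup>L (lebesgue_on {0..L}) (\<lambda>s. G x s * \<sigma>' s)"
      using gb i\<sigma>' unfolding green_def by blast
    obtain D where D: "sol n {0..T} a \<sigma> D" "BCs D"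
      "\<forall>x\<in>{0..T}. integrable (lebesgue_on {0..T}) (\<lambda>s. GM x s * \<sigma> s) \<and>
                   D 0 x = integral\<^sup>L (lebesgue_on {0..T}) (\<lambda>s. GM x s * \<sigma> s)"
      and nr: "nonresonant n {0..T} a BCs"
      using gs i\<sigma> unfolding green_def by blast
    have Wx: "integrable (lebesgue_on {0..T}) (\<lambda>s. G x s * \<sigma> s) \<and>
              integral\<^sup>L (lebesgue_on {0..T}) (\<lambda>s. G x s * \<sigma> s) = W 0 x" if x: "x \<in> {0..L}" for x
    proof -
      have z: "\<forall>s. s \<notin> {0..T} \<longrightarrow> G x s * \<sigma>' s = 0" unfolding \<sigma>'_def by auto
      have i1: "integrable (lebesgue_on {0..L}) (\<lambda>s. G x s * \<sigma>' s)" using W(3) x by blast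
      note r = restrict_int[OF T(2) i1 z]
      have ic: "integrable (lebesgue_on {0..T}) (\<lambda>s. G x s * \<sigma>' s) = integrable (lebesgue_on {0..T}) (\<lambda>s. G x s * \<sigma> s)"
        by (rule Bochner_Integration.integrable_cong) (auto simp: \<sigma>'_def)
      have jc: "integral\<^sup>L (lebesgue_on {0..T}) (\<lambda>s. G x s * \<sigma>' s) = integral\<^sup>L (lebesgue_on {0..T}) (\<lambda>s. G x s * \<sigma> s)"
        by (rule Bochner_Integration.integral_cong) (auto simp: \<sigma>'_def)
      show ?thesis
        using r W(3) x ic jc by auto
    qed
    let ?u = "\<lambda>k t. \<Sum>j<m. c j * (e j ^ k * W k (e j * t + d j))"
    have sj: "sol n {0..T} a (\<lambda>t. c j * \<sigma>' (e j * t + d j)) (\<lambda>k t. c j * (e j ^ k * W k (e j * t + d j)))"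
      if j: "j < m" for j
    proof -
      have "AE t in lebesgue_on {0..T}. \<forall>k<2*n. b k (e j * t + d j) = e j ^ k * a k t"
        using co by (rule eventually_mono) (use j in auto)
      then have "sol n {0..T} a (\<lambda>t. \<sigma>' (e j * t + d j)) (\<lambda>k t. e j ^ k * W k (e j * t + d j))"
        using e mp j by (intro sol_affine[OF W(1) n]) auto
      then show ?thesis by (rule sol_scale)
    qed
    have "sol n {0..T} a (\<lambda>t. \<Sum>j<m. c j * \<sigma>' (e j * t + d j)) ?u"
      using sj by (intro sol_sum) auto
    moreover have "AE t in lebesgue_on {0..T}. (\<Sum>j<m. c j * \<sigma>' (e j * t + d j)) = \<sigma> t"
      using sg unfolding \<sigma>'_def by blast
    ultimately have su: "sol n {0..T} a \<sigma> ?u" by (rule sol_cong_sigma)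
    have bu: "BCs ?u" using bcs W(2) by blast
    have "D 0 t = ?u 0 t" by (rule sol_unique[OF nr D(1) su bcd[rule_format, OF D(2) bu] t])
    also have "\<dots> = (\<Sum>j<m. c j * W 0 (e j * t + d j))" by simp
    also have "\<dots> = (\<Sum>j<m. c j * integral\<^sup>L (lebesgue_on {0..T}) (\<lambda>s. G (e j * t + d j) s * \<sigma> s))"
      using Wx mp t by (intro sum.cong refl) auto
    also have "\<dots> = (\<Sum>j<m. integral\<^sup>L (lebesgue_on {0..T}) (\<lambda>s. c j * (G (e j * t + d j) s * \<sigma> s)))"
      by simp
    also have "\<dots> = integral\<^sup>L (lebesgue_on {0..T}) (\<lambda>s. \<Sum>j<m. c j * (G (e j * t + d j) s * \<sigma> s))"
    proof -
      have "\<And>j. j \<in> {..<m} \<Longrightarrow> integrable (lebesgue_on {0..T}) (\<lambda>s. c j * (G (e j * t + d j) s * \<sigma> s))"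
        using Wx mp t by auto
      from Bochner_Integration.integral_sum[where I="{..<m}" and M="lebesgue_on {0..T}" and f="\<lambda>j s. c j * (G (e j * t + d j) s * \<sigma> s)", OF this]
      show ?thesis by simp
    qed
    finally have eqD: "D 0 t = integral\<^sup>L (lebesgue_on {0..T}) (\<lambda>s. \<Sum>j<m. c j * (G (e j * t + d j) s * \<sigma> s))" .
    have iG: "integrable (lebesgue_on {0..T}) (\<lambda>s. \<Sum>j<m. c j * (G (e j * t + d j) s * \<sigma> s))"
      using Wx mp t by auto
    have iM: "integrable (lebesgue_on {0..T}) (\<lambda>s. GM t s * \<sigma> s)" using D(3) t by blast
    have fe: "(\<lambda>s. ?H s * \<sigma> s) = (\<lambda>s. GM t s * \<sigma> s - (\<Sum>j<m. c j * (G (e j * t + d j) s * \<sigma> s)))"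
      by (auto simp: fun_eq_iff left_diff_distrib sum_distrib_right mult.assoc)
    show "integrable (lebesgue_on {0..T}) (\<lambda>s. ?H s * \<sigma> s) \<and>
          integral\<^sup>L (lebesgue_on {0..T}) (\<lambda>s. ?H s * \<sigma> s) = 0"
      unfolding fe using iG iM eqD D(3) t by auto
  qed
  then show "AE s in lebesgue_on {0..T}. GM t s = (\<Sum>j<m. c j * G (e j * t + d j) s)"
    by (rule eventually_mono) simp
qed



lemma pm_even[simp]: "(-1::real)^(2*k) = 1" by (simp add: power_mult)
lemma pm_odd[simp]: "(-1::real)^(Suc (2*k)) = -1" by (simp add: power_mult)
lemma sgnk: "(if even k then 1 else -1::real) = (-1)^k" by simp

lemma rc_le: "t \<le> c \<Longrightarrow> refl_coeffs c a k t = a k t"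
  unfolding refl_coeffs_def by simp
lemma rc_gt: "t > c \<Longrightarrow> refl_coeffs c a k t = (-1)^k * a k (2*c - t)"
  unfolding refl_coeffs_def by simp

lemma sum2: "(\<Sum>j<(2::nat). f j) = f 0 + f 1" by (simp add: numeral_eq_Suc)
lemma all2: "(\<forall>j<(2::nat). P j) \<longleftrightarrow> P 0 \<and> P 1" by (auto simp: numeral_eq_Suc less_Suc_eq)
lemma sum4: "(\<Sum>j<(4::nat). f j) = f 0 + f 1 + f 2 + f 3" by (simp add: numeral_eq_Suc)
lemma all4: "(\<forall>j<(4::nat). P j) \<longleftrightarrow> P 0 \<and> P 1 \<and> P 2 \<and> P 3"
  by (auto simp: numeral_eq_Suc less_Suc_eq)

lemma AE_int: assumes "T > 0"
  shows "AE t in lebesgue_on {0..T}. 0 < t \<and> t < (T::real)"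
proof -
  have "AE t in lebesgue_on {0..T}. t \<in> {0..T}" using AE_space[of "lebesgue_on {0..T}"] by simp
  moreover have "AE t in lebesgue_on {0..T}. t \<noteq> 0" by (rule AE_pt) simp
  moreover have "AE t in lebesgue_on {0..T}. t \<noteq> T" by (rule AE_pt) simp
  ultimately show ?thesis by eventually_elim auto
qed

lemma part1:
  assumes n: "n \<ge> 1" and T: "T > 0"
    and gs: "green n {0..T} a (BC_M1 n T) GM" and gb: "green n {0..2*T} (refl_coeffs T a) (BC_A n (2*T)) G"
  shows "\<forall>t\<in>{0..T}. AE s in lebesgue_on {0..T}. GM t s = G t s - G (2*T - t) s"
proof -
  have "\<forall>t\<in>{0..T}. AE s in lebesgue_on {0..T}. GM t s =
     (\<Sum>j<2. [1,-1] ! j * G ([1,-1] ! j * t + [0, 2*T] ! j) s)"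
  proof (rule green_comb[where m=2 and c="\<lambda>j. [1,-1] ! j" and e="\<lambda>j. [1,-1] ! j" and d="\<lambda>j. [0,2*T] ! j", OF n _ _ gs gb])
    show "\<forall>j<2. [1,-1] ! j = (1::real) \<or> [1,-1] ! j = (-1::real)" by (simp add: all2)
    show "\<forall>j<2. \<forall>t\<in>{0..T}. [1,-1] ! j * t + [0, 2*T] ! j \<in> {0..2*T}" using T by (simp add: all2)
    show "AE t in lebesgue_on {0..T}. \<forall>j<2. \<forall>k<2*n.
       refl_coeffs T a k ([1,-1] ! j * t + [0, 2*T] ! j) = [1,-1] ! j ^ k * a k t"
      using AE_int[OF T] by eventually_elim (auto simp: all2 rc_le rc_gt)
    show "\<forall>\<sigma>::real\<Rightarrow>real. AE t in lebesgue_on {0..T}. (\<Sum>j<2. [1,-1] ! j *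
       (if [1,-1] ! j * t + [0, 2*T] ! j \<in> {0..T} then \<sigma> ([1,-1] ! j * t + [0, 2*T] ! j) else 0)) = \<sigma> t"
    proof
      fix \<sigma> :: "real \<Rightarrow> real"
      show "AE t in lebesgue_on {0..T}. (\<Sum>j<2. [1,-1] ! j *
       (if [1,-1] ! j * t + [0, 2*T] ! j \<in> {0..T} then \<sigma> ([1,-1] ! j * t + [0, 2*T] ! j) else 0)) = \<sigma> t"
        using AE_int[OF T] by eventually_elim (auto simp: sum2)
    qed
    show "\<forall>W. BC_A n (2*T) W \<longrightarrow> BC_M1 n T (\<lambda>k t. \<Sum>j<2. [1,-1] ! j * ([1,-1] ! j ^ k * W k ([1,-1] ! j * t + [0, 2*T] ! j)))"
      by (auto simp: BC_A_def BC_M1_def sum2)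
    show "\<forall>D1 D2. BC_M1 n T D1 \<longrightarrow> BC_M1 n T D2 \<longrightarrow> BC_M1 n T (\<lambda>k t. D1 k t - D2 k t)"
      by (auto simp: BC_M1_def)
  qed (use T in auto)
  then show ?thesis by (auto simp: sum2 elim!: eventually_mono)
qed


lemma part2:
  assumes n: "n \<ge> 1" and T: "T > 0"
    and gs: "green n {0..T} a (BC_M2 n T) GM" and gb: "green n {0..2*T} (refl_coeffs T a) (BC_A n (2*T)) G"
  shows "\<forall>t\<in>{0..T}. AE s in lebesgue_on {0..T}. GM t s = G t s + G (2*T - t) s"
proof -
  have "\<forall>t\<in>{0..T}. AE s in lebesgue_on {0..T}. GM t s =
     (\<Sum>j<2. [1,1] ! j * G ([1,-1] ! j * t + [0, 2*T] ! j) s)"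
  proof (rule green_comb[where m=2 and c="\<lambda>j. [1,1] ! j" and e="\<lambda>j. [1,-1] ! j" and d="\<lambda>j. [0,2*T] ! j", OF n _ _ gs gb])
    show "\<forall>j<2. [1,-1] ! j = (1::real) \<or> [1,-1] ! j = (-1::real)" by (simp add: all2)
    show "\<forall>j<2. \<forall>t\<in>{0..T}. [1,-1] ! j * t + [0, 2*T] ! j \<in> {0..2*T}" using T by (simp add: all2)
    show "AE t in lebesgue_on {0..T}. \<forall>j<2. \<forall>k<2*n.
       refl_coeffs T a k ([1,-1] ! j * t + [0, 2*T] ! j) = [1,-1] ! j ^ k * a k t"
      using AE_int[OF T] by eventually_elim (auto simp: all2 rc_le rc_gt)
    show "\<forall>\<sigma>::real\<Rightarrow>real. AE t in lebesgue_on {0..T}. (\<Sum>j<2. [1,1] ! j *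
       (if [1,-1] ! j * t + [0, 2*T] ! j \<in> {0..T} then \<sigma> ([1,-1] ! j * t + [0, 2*T] ! j) else 0)) = \<sigma> t"
    proof
      fix \<sigma> :: "real \<Rightarrow> real"
      show "AE t in lebesgue_on {0..T}. (\<Sum>j<2. [1,1] ! j *
       (if [1,-1] ! j * t + [0, 2*T] ! j \<in> {0..T} then \<sigma> ([1,-1] ! j * t + [0, 2*T] ! j) else 0)) = \<sigma> t"
        using AE_int[OF T] by eventually_elim (auto simp: sum2)
    qed
    show "\<forall>W. BC_A n (2*T) W \<longrightarrow> BC_M2 n T (\<lambda>k t. \<Sum>j<2. [1,1] ! j * ([1,-1] ! j ^ k * W k ([1,-1] ! j * t + [0, 2*T] ! j)))"
      by (auto simp: BC_A_def BC_M2_def sum2)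
    show "\<forall>D1 D2. BC_M2 n T D1 \<longrightarrow> BC_M2 n T D2 \<longrightarrow> BC_M2 n T (\<lambda>k t. D1 k t - D2 k t)"
      by (auto simp: BC_M2_def)
  qed (use T in auto)
  then show ?thesis by (auto simp: sum2 elim!: eventually_mono)
qed


lemma part3:
  assumes n: "n \<ge> 1" and T: "T > 0"
    and gs: "green n {0..T} a (BC_M1 n T) GM" and gb: "green n {0..2*T} (refl_coeffs T a) (BC_N n (2*T)) G"
  shows "\<forall>t\<in>{0..T}. AE s in lebesgue_on {0..T}. GM t s = G t s - G (2*T - t) s"
proof -
  have "\<forall>t\<in>{0..T}. AE s in lebesgue_on {0..T}. GM t s =
     (\<Sum>j<2. [1,-1] ! j * G ([1,-1] ! j * t + [0, 2*T] ! j) s)"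
  proof (rule green_comb[where m=2 and c="\<lambda>j. [1,-1] ! j" and e="\<lambda>j. [1,-1] ! j" and d="\<lambda>j. [0,2*T] ! j", OF n _ _ gs gb])
    show "\<forall>j<2. [1,-1] ! j = (1::real) \<or> [1,-1] ! j = (-1::real)" by (simp add: all2)
    show "\<forall>j<2. \<forall>t\<in>{0..T}. [1,-1] ! j * t + [0, 2*T] ! j \<in> {0..2*T}" using T by (simp add: all2)
    show "AE t in lebesgue_on {0..T}. \<forall>j<2. \<forall>k<2*n.
       refl_coeffs T a k ([1,-1] ! j * t + [0, 2*T] ! j) = [1,-1] ! j ^ k * a k t"
      using AE_int[OF T] by eventually_elim (auto simp: all2 rc_le rc_gt)
    show "\<forall>\<sigma>::real\<Rightarrow>real. AE t in lebesgue_on {0..T}. (\<Sum>j<2. [1,-1] ! j *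
       (if [1,-1] ! j * t + [0, 2*T] ! j \<in> {0..T} then \<sigma> ([1,-1] ! j * t + [0, 2*T] ! j) else 0)) = \<sigma> t"
    proof
      fix \<sigma> :: "real \<Rightarrow> real"
      show "AE t in lebesgue_on {0..T}. (\<Sum>j<2. [1,-1] ! j *
       (if [1,-1] ! j * t + [0, 2*T] ! j \<in> {0..T} then \<sigma> ([1,-1] ! j * t + [0, 2*T] ! j) else 0)) = \<sigma> t"
        using AE_int[OF T] by eventually_elim (auto simp: sum2)
    qed
    show "\<forall>W. BC_N n (2*T) W \<longrightarrow> BC_M1 n T (\<lambda>k t. \<Sum>j<2. [1,-1] ! j * ([1,-1] ! j ^ k * W k ([1,-1] ! j * t + [0, 2*T] ! j)))"
      by (auto simp: BC_N_def BC_M1_def sum2)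
    show "\<forall>D1 D2. BC_M1 n T D1 \<longrightarrow> BC_M1 n T D2 \<longrightarrow> BC_M1 n T (\<lambda>k t. D1 k t - D2 k t)"
      by (auto simp: BC_M1_def)
  qed (use T in auto)
  then show ?thesis by (auto simp: sum2 elim!: eventually_mono)
qed


lemma part4:
  assumes n: "n \<ge> 1" and T: "T > 0"
    and gs: "green n {0..T} a (BC_M2 n T) GM" and gb: "green n {0..2*T} (refl_coeffs T a) (BC_D n (2*T)) G"
  shows "\<forall>t\<in>{0..T}. AE s in lebesgue_on {0..T}. GM t s = G t s + G (2*T - t) s"
proof -
  have "\<forall>t\<in>{0..T}. AE s in lebesgue_on {0..T}. GM t s =
     (\<Sum>j<2. [1,1] ! j * G ([1,-1] ! j * t + [0, 2*T] ! j) s)"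
  proof (rule green_comb[where m=2 and c="\<lambda>j. [1,1] ! j" and e="\<lambda>j. [1,-1] ! j" and d="\<lambda>j. [0,2*T] ! j", OF n _ _ gs gb])
    show "\<forall>j<2. [1,-1] ! j = (1::real) \<or> [1,-1] ! j = (-1::real)" by (simp add: all2)
    show "\<forall>j<2. \<forall>t\<in>{0..T}. [1,-1] ! j * t + [0, 2*T] ! j \<in> {0..2*T}" using T by (simp add: all2)
    show "AE t in lebesgue_on {0..T}. \<forall>j<2. \<forall>k<2*n.
       refl_coeffs T a k ([1,-1] ! j * t + [0, 2*T] ! j) = [1,-1] ! j ^ k * a k t"
      using AE_int[OF T] by eventually_elim (auto simp: all2 rc_le rc_gt)
    show "\<forall>\<sigma>::real\<Rightarrow>real. AE t in lebesgue_on {0..T}. (\<Sum>j<2. [1,1] ! j *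
       (if [1,-1] ! j * t + [0, 2*T] ! j \<in> {0..T} then \<sigma> ([1,-1] ! j * t + [0, 2*T] ! j) else 0)) = \<sigma> t"
    proof
      fix \<sigma> :: "real \<Rightarrow> real"
      show "AE t in lebesgue_on {0..T}. (\<Sum>j<2. [1,1] ! j *
       (if [1,-1] ! j * t + [0, 2*T] ! j \<in> {0..T} then \<sigma> ([1,-1] ! j * t + [0, 2*T] ! j) else 0)) = \<sigma> t"
        using AE_int[OF T] by eventually_elim (auto simp: sum2)
    qed
    show "\<forall>W. BC_D n (2*T) W \<longrightarrow> BC_M2 n T (\<lambda>k t. \<Sum>j<2. [1,1] ! j * ([1,-1] ! j ^ k * W k ([1,-1] ! j * t + [0, 2*T] ! j)))"
      by (auto simp: BC_D_def BC_M2_def sum2)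
    show "\<forall>D1 D2. BC_M2 n T D1 \<longrightarrow> BC_M2 n T D2 \<longrightarrow> BC_M2 n T (\<lambda>k t. D1 k t - D2 k t)"
      by (auto simp: BC_M2_def)
  qed (use T in auto)
  then show ?thesis by (auto simp: sum2 elim!: eventually_mono)
qed


lemma co4:
  assumes T: "T > 0"
  shows "AE t in lebesgue_on {0..T}. \<forall>j<4. \<forall>k<2*n.
       refl_coeffs (2*T) (refl_coeffs T a) k ([1,-1,-1,1] ! j * t + [0, 4*T, 2*T, 2*T] ! j) = [1,-1,-1,1] ! j ^ k * a k t"
  using AE_int[OF T]
proof eventually_elim
  case (elim t)
  have a: "refl_coeffs (2*T) (refl_coeffs T a) k t = a k t" for k
    using elim T by (simp add: rc_le)
  have b: "refl_coeffs (2*T) (refl_coeffs T a) k (- t + 4*T) = (-1)^k * a k t" for k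
  proof -
    have "refl_coeffs (2*T) (refl_coeffs T a) k (- t + 4*T) = (-1)^k * refl_coeffs T a k (2*(2*T) - (- t + 4*T))"
      using elim T by (intro rc_gt) simp
    also have "2*(2*T) - (- t + 4*T) = t" by simp
    finally show ?thesis using elim by (simp add: rc_le)
  qed
  have c: "refl_coeffs (2*T) (refl_coeffs T a) k (- t + 2*T) = (-1)^k * a k t" for k
  proof -
    have "refl_coeffs (2*T) (refl_coeffs T a) k (- t + 2*T) = refl_coeffs T a k (- t + 2*T)"
      using elim T by (intro rc_le) simp
    also have "\<dots> = (-1)^k * a k (2*T - (- t + 2*T))" using elim by (intro rc_gt) simp
    finally show ?thesis by simp
  qed
  have d: "refl_coeffs (2*T) (refl_coeffs T a) k (t + 2*T) = a k t" for k
  proof -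
    have "refl_coeffs (2*T) (refl_coeffs T a) k (t + 2*T) = (-1)^k * refl_coeffs T a k (2*(2*T) - (t + 2*T))"
      using elim T by (intro rc_gt) simp
    also have "2*(2*T) - (t + 2*T) = 2*T - t" by simp
    also have "refl_coeffs T a k (2*T - t) = (-1)^k * a k (2*T - (2*T - t))" using elim by (intro rc_gt) simp
    finally show ?thesis by (simp flip: power_mult_distrib)
  qed
  show ?case using a b c d by (simp add: all4)
qed

lemma part5:
  assumes n: "n \<ge> 1" and T: "T > 0"
    and gs: "green n {0..T} a (BC_M1 n T) GM"
    and gb: "green n {0..4*T} (refl_coeffs (2*T) (refl_coeffs T a)) (BC_P n (4*T)) G"
  shows "\<forall>t\<in>{0..T}. AE s in lebesgue_on {0..T}.
         GM t s = G t s + G (4*T - t) s - G (2*T - t) s - G (2*T + t) s"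
proof -
  have "\<forall>t\<in>{0..T}. AE s in lebesgue_on {0..T}. GM t s =
     (\<Sum>j<4. [1,1,-1,-1] ! j * G ([1,-1,-1,1] ! j * t + [0, 4*T, 2*T, 2*T] ! j) s)"
  proof (rule green_comb[where m=4 and c="\<lambda>j. [1,1,-1,-1] ! j" and e="\<lambda>j. [1,-1,-1,1] ! j"
        and d="\<lambda>j. [0,4*T,2*T,2*T] ! j", OF n _ _ gs gb])
    show "\<forall>j<4. [1,-1,-1,1] ! j = (1::real) \<or> [1,-1,-1,1] ! j = (-1::real)" by (simp add: all4)
    show "\<forall>j<4. \<forall>t\<in>{0..T}. [1,-1,-1,1] ! j * t + [0,4*T,2*T,2*T] ! j \<in> {0..4*T}" using T by (simp add: all4)
    show "AE t in lebesgue_on {0..T}. \<forall>j<4. \<forall>k<2*n.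
       refl_coeffs (2*T) (refl_coeffs T a) k ([1,-1,-1,1] ! j * t + [0, 4*T, 2*T, 2*T] ! j) = [1,-1,-1,1] ! j ^ k * a k t"
      by (rule co4[OF T])
    show "\<forall>\<sigma>::real\<Rightarrow>real. AE t in lebesgue_on {0..T}. (\<Sum>j<4. [1,1,-1,-1] ! j *
       (if [1,-1,-1,1] ! j * t + [0,4*T,2*T,2*T] ! j \<in> {0..T} then \<sigma> ([1,-1,-1,1] ! j * t + [0,4*T,2*T,2*T] ! j) else 0)) = \<sigma> t"
    proof
      fix \<sigma> :: "real \<Rightarrow> real"
      show "AE t in lebesgue_on {0..T}. (\<Sum>j<4. [1,1,-1,-1] ! j *
       (if [1,-1,-1,1] ! j * t + [0,4*T,2*T,2*T] ! j \<in> {0..T} then \<sigma> ([1,-1,-1,1] ! j * t + [0,4*T,2*T,2*T] ! j) else 0)) = \<sigma> t"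
        using AE_int[OF T] by eventually_elim (auto simp: sum4)
    qed
    show "\<forall>W. BC_P n (4*T) W \<longrightarrow> BC_M1 n T (\<lambda>k t. \<Sum>j<4. [1,1,-1,-1] ! j * ([1,-1,-1,1] ! j ^ k * W k ([1,-1,-1,1] ! j * t + [0,4*T,2*T,2*T] ! j)))"
      by (auto simp: BC_P_def BC_M1_def sum4)
    show "\<forall>D1 D2. BC_M1 n T D1 \<longrightarrow> BC_M1 n T D2 \<longrightarrow> BC_M1 n T (\<lambda>k t. D1 k t - D2 k t)"
      by (auto simp: BC_M1_def)
  qed (use T in auto)
  moreover have "\<And>t. t + 2*T = 2*T + t" by simp
  ultimately show ?thesis by (auto simp: sum4 elim!: eventually_mono)
qed

lemma part6:
  assumes n: "n \<ge> 1" and T: "T > 0"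
    and gs: "green n {0..T} a (BC_M2 n T) GM"
    and gb: "green n {0..4*T} (refl_coeffs (2*T) (refl_coeffs T a)) (BC_P n (4*T)) G"
  shows "\<forall>t\<in>{0..T}. AE s in lebesgue_on {0..T}.
         GM t s = G t s - G (4*T - t) s + G (2*T - t) s - G (2*T + t) s"
proof -
  have "\<forall>t\<in>{0..T}. AE s in lebesgue_on {0..T}. GM t s =
     (\<Sum>j<4. [1,-1,1,-1] ! j * G ([1,-1,-1,1] ! j * t + [0, 4*T, 2*T, 2*T] ! j) s)"
  proof (rule green_comb[where m=4 and c="\<lambda>j. [1,-1,1,-1] ! j" and e="\<lambda>j. [1,-1,-1,1] ! j"
        and d="\<lambda>j. [0,4*T,2*T,2*T] ! j", OF n _ _ gs gb])
    show "\<forall>j<4. [1,-1,-1,1] ! j = (1::real) \<or> [1,-1,-1,1] ! j = (-1::real)" by (simp add: all4)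
    show "\<forall>j<4. \<forall>t\<in>{0..T}. [1,-1,-1,1] ! j * t + [0,4*T,2*T,2*T] ! j \<in> {0..4*T}" using T by (simp add: all4)
    show "AE t in lebesgue_on {0..T}. \<forall>j<4. \<forall>k<2*n.
       refl_coeffs (2*T) (refl_coeffs T a) k ([1,-1,-1,1] ! j * t + [0, 4*T, 2*T, 2*T] ! j) = [1,-1,-1,1] ! j ^ k * a k t"
      by (rule co4[OF T])
    show "\<forall>\<sigma>::real\<Rightarrow>real. AE t in lebesgue_on {0..T}. (\<Sum>j<4. [1,-1,1,-1] ! j *
       (if [1,-1,-1,1] ! j * t + [0,4*T,2*T,2*T] ! j \<in> {0..T} then \<sigma> ([1,-1,-1,1] ! j * t + [0,4*T,2*T,2*T] ! j) else 0)) = \<sigma> t"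
    proof
      fix \<sigma> :: "real \<Rightarrow> real"
      show "AE t in lebesgue_on {0..T}. (\<Sum>j<4. [1,-1,1,-1] ! j *
       (if [1,-1,-1,1] ! j * t + [0,4*T,2*T,2*T] ! j \<in> {0..T} then \<sigma> ([1,-1,-1,1] ! j * t + [0,4*T,2*T,2*T] ! j) else 0)) = \<sigma> t"
        using AE_int[OF T] by eventually_elim (auto simp: sum4)
    qed
    show "\<forall>W. BC_P n (4*T) W \<longrightarrow> BC_M2 n T (\<lambda>k t. \<Sum>j<4. [1,-1,1,-1] ! j * ([1,-1,-1,1] ! j ^ k * W k ([1,-1,-1,1] ! j * t + [0,4*T,2*T,2*T] ! j)))"
      by (auto simp: BC_P_def BC_M2_def sum4)
    show "\<forall>D1 D2. BC_M2 n T D1 \<longrightarrow> BC_M2 n T D2 \<longrightarrow> BC_M2 n T (\<lambda>k t. D1 k t - D2 k t)"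
      by (auto simp: BC_M2_def)
  qed (use T in auto)
  moreover have "\<And>t. t + 2*T = 2*T + t" by simp
  ultimately show ?thesis by (auto simp: sum4 elim!: eventually_mono)
qed


theorem mainTheorem3:
  fixes n :: nat and T \<alpha> :: real and a :: "nat \<Rightarrow> real \<Rightarrow> real"
  assumes "n \<ge> 1" and "T > 0" and "\<alpha> \<ge> 1"
    and "\<forall>k<2*n. a k \<in> borel_measurable (lebesgue_on {0..T}) \<and>
                  integrable (lebesgue_on {0..T}) (\<lambda>t. \<bar>a k t\<bar> powr \<alpha>)"
  shows
   "(\<forall>GM1 GA. green n {0..T} a (BC_M1 n T) GM1 \<and>
        green n {0..2*T} (refl_coeffs T a) (BC_A n (2*T)) GA \<longrightarrow>
      (\<forall>t\<in>{0..T}. AE s in lebesgue_on {0..T}. GM1 t s = GA t s - GA (2*T - t) s)) \<and>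
    (\<forall>GM2 GA. green n {0..T} a (BC_M2 n T) GM2 \<and>
        green n {0..2*T} (refl_coeffs T a) (BC_A n (2*T)) GA \<longrightarrow>
      (\<forall>t\<in>{0..T}. AE s in lebesgue_on {0..T}. GM2 t s = GA t s + GA (2*T - t) s)) \<and>
    (\<forall>GM1 GN. green n {0..T} a (BC_M1 n T) GM1 \<and>
        green n {0..2*T} (refl_coeffs T a) (BC_N n (2*T)) GN \<longrightarrow>
      (\<forall>t\<in>{0..T}. AE s in lebesgue_on {0..T}. GM1 t s = GN t s - GN (2*T - t) s)) \<and>
    (\<forall>GM2 GD. green n {0..T} a (BC_M2 n T) GM2 \<and>
        green n {0..2*T} (refl_coeffs T a) (BC_D n (2*T)) GD \<longrightarrow>
      (\<forall>t\<in>{0..T}. AE s in lebesgue_on {0..T}. GM2 t s = GD t s + GD (2*T - t) s)) \<and>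
    (\<forall>GM1 GP. green n {0..T} a (BC_M1 n T) GM1 \<and>
        green n {0..4*T} (refl_coeffs (2*T) (refl_coeffs T a)) (BC_P n (4*T)) GP \<longrightarrow>
      (\<forall>t\<in>{0..T}. AE s in lebesgue_on {0..T}.
         GM1 t s = GP t s + GP (4*T - t) s - GP (2*T - t) s - GP (2*T + t) s)) \<and>
    (\<forall>GM2 GP. green n {0..T} a (BC_M2 n T) GM2 \<and>
        green n {0..4*T} (refl_coeffs (2*T) (refl_coeffs T a)) (BC_P n (4*T)) GP \<longrightarrow>
      (\<forall>t\<in>{0..T}. AE s in lebesgue_on {0..T}.
         GM2 t s = GP t s - GP (4*T - t) s + GP (2*T - t) s - GP (2*T + t) s))"
  proof (intro conjI allI impI)
  fix GM G assume h: "green n {0..T} a (BC_M1 n T) GM \<and> green n {0..2*T} (refl_coeffs T a) (BC_A n (2*T)) G"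
  then show "\<forall>t\<in>{0..T}. AE s in lebesgue_on {0..T}. GM t s = G t s - G (2*T - t) s"
    using part1[OF assms(1,2)] by blast
next
  fix GM G assume h: "green n {0..T} a (BC_M2 n T) GM \<and> green n {0..2*T} (refl_coeffs T a) (BC_A n (2*T)) G"
  then show "\<forall>t\<in>{0..T}. AE s in lebesgue_on {0..T}. GM t s = G t s + G (2*T - t) s"
    using part2[OF assms(1,2)] by blast
next
  fix GM G assume h: "green n {0..T} a (BC_M1 n T) GM \<and> green n {0..2*T} (refl_coeffs T a) (BC_N n (2*T)) G"
  then show "\<forall>t\<in>{0..T}. AE s in lebesgue_on {0..T}. GM t s = G t s - G (2*T - t) s"
    using part3[OF assms(1,2)] by blast
next
  fix GM G assume h: "green n {0..T} a (BC_M2 n T) GM \<and> green n {0..2*T} (refl_coeffs T a) (BC_D n (2*T)) G"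
  then show "\<forall>t\<in>{0..T}. AE s in lebesgue_on {0..T}. GM t s = G t s + G (2*T - t) s"
    using part4[OF assms(1,2)] by blast
next
  fix GM G assume h: "green n {0..T} a (BC_M1 n T) GM \<and>
        green n {0..4*T} (refl_coeffs (2*T) (refl_coeffs T a)) (BC_P n (4*T)) G"
  then show "\<forall>t\<in>{0..T}. AE s in lebesgue_on {0..T}.
         GM t s = G t s + G (4*T - t) s - G (2*T - t) s - G (2*T + t) s"
    using part5[OF assms(1,2)] by blast
next
  fix GM G assume h: "green n {0..T} a (BC_M2 n T) GM \<and>
        green n {0..4*T} (refl_coeffs (2*T) (refl_coeffs T a)) (BC_P n (4*T)) G"
  then show "\<forall>t\<in>{0..T}. AE s in lebesgue_on {0..T}.
         GM t s = G t s - G (4*T - t) s + G (2*T - t) s - G (2*T + t) s"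
    using part6[OF assms(1,2)] by blast
qed

end
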